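(* Let $X$ be a compact subset of a real normed vector space $(V,\|\cdot\|)$. Fix $\varepsilon>0$ and a continuous $f:X\to\mathbb R$ such that $af(x)\le\varepsilon+a\|x\|$ for all $x\in X$ and $a\in[0,1]$. Define, for $y\in X$, $$\hat f(y)=\inf_{a\in[0,1],\,b\in(0,1],\,x\in X}\frac1b\big(\varepsilon+\|ax-by\|-af(x)\big).$$ Then the following hold. 1. For every $y\in X$, $-\|y\|\le\hat f(y)\le -f(y)+\varepsilon$. 2. $\hat f$ is $1$-Lipschitz on $X$. 3. For all $x,y\in X$ and $a,b\in[0,1]$, $a\hat f(x)-b\hat f(y)\le a\varepsilon+\|by-ax\|$. *)

theory Defs
  imports "HOL-Analysis.Analysis"
begin

definition fhat :: "real \<Rightarrow> ('v::real_normed_vector \<Rightarrow> real) \<Rightarrow> 'v set \<Rightarrow> 'v \<Rightarrow> real" where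
  "fhat \<epsilon> f X y = (INF p \<in> {0..1} \<times> {0<..1} \<times> X.
      (case p of (a, b, x) \<Rightarrow> (1 / b) * (\<epsilon> + norm (a *\<^sub>R x - b *\<^sub>R y) - a * f x)))"

end

theory Submission
  imports Defs
begin

lemma fhat_alt: "fhat e f X y = (INF p \<in> {0..1} \<times> {0<..1} \<times> X.
      (case p of (a, b, x) \<Rightarrow> (1 / b) * (e + norm (a *\<^sub>R x - b *\<^sub>R y) - a * f x)))"
  by (simp add: fhat_def)

lemma G_lower:
  fixes f :: "'v::real_normed_vector \<Rightarrow> real"
  assumes H: "\<And>x a. x \<in> X \<Longrightarrow> a \<in> {0..1} \<Longrightarrow> a * f x \<le> e + a * norm x"
    and a: "a \<in> {0..1}" and b: "b \<in> {0<..1}" and x: "x \<in> X"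
  shows "- norm y \<le> (1/b) * (e + norm (a *\<^sub>R x - b *\<^sub>R y) - a * f x)"
proof -
  have "norm (a *\<^sub>R x) - norm (b *\<^sub>R y) \<le> norm (a *\<^sub>R x - b *\<^sub>R y)"
    by (rule norm_triangle_ineq2)
  moreover have "norm (a *\<^sub>R x) = a * norm x" "norm (b *\<^sub>R y) = b * norm y" using a b by auto
  moreover have "a * f x \<le> e + a * norm x" using H x a by auto
  ultimately have "- b * norm y \<le> e + norm (a *\<^sub>R x - b *\<^sub>R y) - a * f x" by linarith
  then show ?thesis using b by (simp add: field_simps)
qed

lemma bdd:
  fixes f :: "'v::real_normed_vector \<Rightarrow> real"
  assumes H: "\<And>x a. x \<in> X \<Longrightarrow> a \<in> {0..1} \<Longrightarrow> a * f x \<le> e + a * norm x"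
  shows "bdd_below ((\<lambda>p. case p of (a, b, x) \<Rightarrow> (1 / b) * (e + norm (a *\<^sub>R x - b *\<^sub>R y) - a * f x)) ` ({0..1} \<times> {0<..1} \<times> X))"
  apply (rule bdd_belowI[where m="- norm y"])
  using G_lower[OF H] by auto

lemma fhat_le:
  fixes f :: "'v::real_normed_vector \<Rightarrow> real"
  assumes H: "\<And>x a. x \<in> X \<Longrightarrow> a \<in> {0..1} \<Longrightarrow> a * f x \<le> e + a * norm x"
    and a: "a \<in> {0..1}" and b: "b \<in> {0<..1}" and x: "x \<in> X"
  shows "fhat e f X y \<le> (1/b) * (e + norm (a *\<^sub>R x - b *\<^sub>R y) - a * f x)"
proof -
  have "(a,b,x) \<in> {0..1} \<times> {0<..1} \<times> X" using a b x by auto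
  from cInf_lower[OF imageI[OF this] bdd[OF H, where y=y]] show ?thesis
    by (simp add: fhat_def)
qed

lemma fhat_ge:
  fixes f :: "'v::real_normed_vector \<Rightarrow> real"
  assumes ne: "X \<noteq> {}"
    and c: "\<And>a b x. a \<in> {0..1} \<Longrightarrow> b \<in> {0<..1} \<Longrightarrow> x \<in> X \<Longrightarrow>
       c \<le> (1/b) * (e + norm (a *\<^sub>R x - b *\<^sub>R y) - a * f x)"
  shows "c \<le> fhat e f X y"
  unfolding fhat_def
  apply (rule cINF_greatest)
  using ne apply auto[1]
  using c by auto

theorem lemma1:
  fixes X :: "'v::real_normed_vector set" and f :: "'v \<Rightarrow> real" and \<epsilon> :: real
  assumes "compact X" and "\<epsilon> > 0" and "continuous_on X f"
    and "\<And>x a. x \<in> X \<Longrightarrow> a \<in> {0..1} \<Longrightarrow> a * f x \<le> \<epsilon> + a * norm x"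
  shows "(\<forall>y\<in>X. - norm y \<le> fhat \<epsilon> f X y \<and> fhat \<epsilon> f X y \<le> - f y + \<epsilon>)
    \<and> 1-lipschitz_on X (fhat \<epsilon> f X)
    \<and> (\<forall>x\<in>X. \<forall>y\<in>X. \<forall>a\<in>{0..1}. \<forall>b\<in>{0..1}.
         a * fhat \<epsilon> f X x - b * fhat \<epsilon> f X y \<le> a * \<epsilon> + norm (b *\<^sub>R y - a *\<^sub>R x))"
proof -
  note H = assms(4)
  have lowb: "- norm y \<le> fhat \<epsilon> f X y" if "y \<in> X" for y
    apply (rule fhat_ge)
    using that G_lower[OF H] by auto
  have P1: "\<forall>y\<in>X. - norm y \<le> fhat \<epsilon> f X y \<and> fhat \<epsilon> f X y \<le> - f y + \<epsilon>"
  proof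
    fix y assume y: "y \<in> X"
    have "fhat \<epsilon> f X y \<le> (1/1) * (\<epsilon> + norm (1 *\<^sub>R y - 1 *\<^sub>R y) - 1 * f y)"
      by (rule fhat_le[OF H]) (use y in auto)
    then show "- norm y \<le> fhat \<epsilon> f X y \<and> fhat \<epsilon> f X y \<le> - f y + \<epsilon>"
      using lowb[OF y] by simp
  qed
  have lip1: "fhat \<epsilon> f X x - dist x y \<le> fhat \<epsilon> f X y" if x: "x \<in> X" and y: "y \<in> X" for x y
  proof (rule fhat_ge)
    show "X \<noteq> {}" using x by auto
    fix a b z assume a: "a \<in> {0..1::real}" and b: "b \<in> {0<..1::real}" and z: "z \<in> X"
    have 1: "fhat \<epsilon> f X x \<le> (1/b) * (\<epsilon> + norm (a *\<^sub>R z - b *\<^sub>R x) - a * f z)"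
      by (rule fhat_le[OF H a b z])
    have "norm (a *\<^sub>R z - b *\<^sub>R x) \<le> norm (a *\<^sub>R z - b *\<^sub>R y) + norm (b *\<^sub>R y - b *\<^sub>R x)"
      using norm_triangle_ineq[of "a *\<^sub>R z - b *\<^sub>R y" "b *\<^sub>R y - b *\<^sub>R x"] by simp
    also have "norm (b *\<^sub>R y - b *\<^sub>R x) = b * dist x y"
      using b by (simp add: dist_norm flip: scaleR_diff_right) (simp add: norm_minus_commute)
    finally have "(1/b) * (\<epsilon> + norm (a *\<^sub>R z - b *\<^sub>R x) - a * f z)
       \<le> (1/b) * (\<epsilon> + norm (a *\<^sub>R z - b *\<^sub>R y) - a * f z) + dist x y"
    proof -
      assume N: "norm (a *\<^sub>R z - b *\<^sub>R x) \<le> norm (a *\<^sub>R z - b *\<^sub>R y) + b * dist x y"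
      have "(1/b) * (\<epsilon> + norm (a *\<^sub>R z - b *\<^sub>R x) - a * f z)
         \<le> (1/b) * ((\<epsilon> + norm (a *\<^sub>R z - b *\<^sub>R y) - a * f z) + b * dist x y)"
        using N b by (intro mult_left_mono) auto
      also have "\<dots> = (1/b) * (\<epsilon> + norm (a *\<^sub>R z - b *\<^sub>R y) - a * f z) + dist x y"
        using b by (simp add: distrib_left)
      finally show ?thesis .
    qed
    with 1 show "fhat \<epsilon> f X x - dist x y \<le> (1/b) * (\<epsilon> + norm (a *\<^sub>R z - b *\<^sub>R y) - a * f z)"
      by linarith
  qed
  have P2: "1-lipschitz_on X (fhat \<epsilon> f X)"
  proof (rule lipschitz_onI)
    fix x y assume x: "x \<in> X" and y: "y \<in> X"
    show "dist (fhat \<epsilon> f X x) (fhat \<epsilon> f X y) \<le> 1 * dist x y"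
      using lip1[OF x y] lip1[OF y x] by (simp add: dist_real_def dist_commute abs_le_iff)
  qed simp
  have P3: "a * fhat \<epsilon> f X x - b * fhat \<epsilon> f X y \<le> a * \<epsilon> + norm (b *\<^sub>R y - a *\<^sub>R x)"
    if x: "x \<in> X" and y: "y \<in> X" and a: "a \<in> {0..1}" and b: "b \<in> {0..1}" for x y a b
  proof (cases "a = 0")
    case True
    have "- b * fhat \<epsilon> f X y \<le> b * norm y"
      using mult_left_mono[OF lowb[OF y], of b] b by simp
    then show ?thesis using True b by simp
  next
    case a0: False
    hence apos: "a > 0" using a by auto
    show ?thesis
    proof (cases "b = 0")
      case True
      have "fhat \<epsilon> f X x \<le> (1/1) * (\<epsilon> + norm (0 *\<^sub>R x - 1 *\<^sub>R x) - 0 * f x)"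
        by (rule fhat_le[OF H]) (use x in auto)
      hence "fhat \<epsilon> f X x \<le> \<epsilon> + norm x" by simp
      hence "a * fhat \<epsilon> f X x \<le> a * (\<epsilon> + norm x)" using apos by simp
      then show ?thesis using True apos by (simp add: algebra_simps)
    next
      case b0: False
      hence bpos: "b > 0" using b by auto
      have "(a * fhat \<epsilon> f X x - a * \<epsilon> - norm (b *\<^sub>R y - a *\<^sub>R x)) / b \<le> fhat \<epsilon> f X y"
      proof (rule fhat_ge)
        show "X \<noteq> {}" using x by auto
        fix a' b' z assume a': "a' \<in> {0..1::real}" and b': "b' \<in> {0<..1::real}" and z: "z \<in> X"
        define t where "t = b / b'"
        have tpos: "t > 0" using bpos b' by (simp add: t_def)
        have btb: "b = t * b'" using b' by (simp add: t_def)
        define s where "s = max a (t * a')"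
        have spos: "s > 0" using apos by (simp add: s_def)
        have "t * a' \<le> t" using mult_left_mono[of a' 1 t] a' tpos by simp
        hence sle: "s \<le> a + t" using tpos apos unfolding s_def by linarith
        have a'': "t * a' / s \<in> {0..1}" using spos tpos a'
          by (auto simp: s_def field_simps)
        have b'': "a / s \<in> {0<..1}" using spos apos by (auto simp: s_def field_simps)
        have 1: "fhat \<epsilon> f X x \<le> (1/(a/s)) * (\<epsilon> + norm ((t * a' / s) *\<^sub>R z - (a/s) *\<^sub>R x) - (t * a' / s) * f z)"
          by (rule fhat_le[OF H a'' b'' z])
        have "norm ((t * a' / s) *\<^sub>R z - (a/s) *\<^sub>R x) = norm ((1/s) *\<^sub>R ((t * a') *\<^sub>R z - a *\<^sub>R x))"
          by (simp add: scaleR_diff_right)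
        also have "\<dots> = (1/s) * norm ((t * a') *\<^sub>R z - a *\<^sub>R x)" using spos by simp
        finally have eq: "norm ((t * a' / s) *\<^sub>R z - (a/s) *\<^sub>R x) = (1/s) * norm ((t * a') *\<^sub>R z - a *\<^sub>R x)" .
        have "(1/(a/s)) * (\<epsilon> + norm ((t * a' / s) *\<^sub>R z - (a/s) *\<^sub>R x) - (t * a' / s) * f z)
          = (s * \<epsilon> + norm ((t * a') *\<^sub>R z - a *\<^sub>R x) - t * a' * f z) / a"
          using spos apos unfolding eq by (simp add: field_simps)
        with 1 have 2: "a * fhat \<epsilon> f X x \<le> s * \<epsilon> + norm ((t * a') *\<^sub>R z - a *\<^sub>R x) - t * a' * f z"
          using apos by (simp add: field_simps)
        have "norm ((t * a') *\<^sub>R z - a *\<^sub>R x) \<le> norm ((t * a') *\<^sub>R z - b *\<^sub>R y) + norm (b *\<^sub>R y - a *\<^sub>R x)"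
          using norm_triangle_ineq[of "(t * a') *\<^sub>R z - b *\<^sub>R y" "b *\<^sub>R y - a *\<^sub>R x"] by simp
        also have "norm ((t * a') *\<^sub>R z - b *\<^sub>R y) = t * norm (a' *\<^sub>R z - b' *\<^sub>R y)"
        proof -
          have "(t * a') *\<^sub>R z - b *\<^sub>R y = t *\<^sub>R (a' *\<^sub>R z - b' *\<^sub>R y)"
            by (simp add: btb scaleR_diff_right)
          then show ?thesis using tpos by simp
        qed
        finally have 3: "norm ((t * a') *\<^sub>R z - a *\<^sub>R x) \<le> t * norm (a' *\<^sub>R z - b' *\<^sub>R y) + norm (b *\<^sub>R y - a *\<^sub>R x)" .
        have 4: "s * \<epsilon> \<le> a * \<epsilon> + t * \<epsilon>" using sle assms(2)
          by (metis distrib_right mult_right_mono less_imp_le)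
        from 2 3 4 have "a * fhat \<epsilon> f X x - a * \<epsilon> - norm (b *\<^sub>R y - a *\<^sub>R x)
            \<le> t * (\<epsilon> + norm (a' *\<^sub>R z - b' *\<^sub>R y) - a' * f z)"
          by (simp add: algebra_simps)
        also have "\<dots> = b * ((1/b') * (\<epsilon> + norm (a' *\<^sub>R z - b' *\<^sub>R y) - a' * f z))"
          by (simp add: t_def)
        finally show "(a * fhat \<epsilon> f X x - a * \<epsilon> - norm (b *\<^sub>R y - a *\<^sub>R x)) / b
            \<le> (1/b') * (\<epsilon> + norm (a' *\<^sub>R z - b' *\<^sub>R y) - a' * f z)"
          using bpos by (simp add: divide_le_eq mult.commute)
      qed
      then show ?thesis using bpos by (simp add: divide_le_eq mult.commute)
    qed
  qed
  show ?thesis using P1 P2 P3 by blast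
qed

end
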